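(* Let $G$ be an almost well-covered $\{C_3,C_4,C_5,C_7\}$-free graph with no vertex of type $2$. Then every connected component of $G_0$ is isomorphic to one of $P_1$, $P_2$, $P_3$, $P_4$, $P_5$, $P_6$, $P_7$, $P_8$, $P_{10}$, $C_6$, $C_8$, $C_9$, $C_{10}$, $C_{11}$, $C_{13}$.
   Context: All graphs are finite and simple. $P_n$ and $C_n$ denote the path and cycle on $n$ vertices; $G$ is $\{C_3,C_4,C_5,C_7\}$-free if it has no induced subgraph isomorphic to any of these cycles. For a graph $G$, $\alpha(G)$ is the maximum size of an independent set and $i(G)$ the minimum size of an inclusion-maximal independent set; $G$ is almost well-covered if $\alpha(G)-i(G)=1$. Types of vertices: let $U$ be the set of vertices of $G$ whose connected component is a complete graph. In $G-U$, vertices of degree $1$ are leaves and the others are internal vertices. An internal vertex adjacent to exactly $k$ leaves is of type $k$; every vertex of $U$ is of type $0$. $G_0$ denotes the subgraph of $G$ induced by all vertices of type $0$. *)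

theory Defs
  imports Main
begin

definition simple_graph :: "'a set \<Rightarrow> ('a \<Rightarrow> 'a \<Rightarrow> bool) \<Rightarrow> bool" where
  "simple_graph V E \<longleftrightarrow> finite V \<and> (\<forall>x y. E x y \<longrightarrow> x \<in> V \<and> y \<in> V)
     \<and> (\<forall>x y. E x y \<longrightarrow> E y x) \<and> (\<forall>x. \<not> E x x)"

definition path_adj :: "nat \<Rightarrow> nat \<Rightarrow> bool" where
  "path_adj i j \<longleftrightarrow> j = Suc i \<or> i = Suc j"

definition cycle_adj :: "nat \<Rightarrow> nat \<Rightarrow> nat \<Rightarrow> bool" where
  "cycle_adj n i j \<longleftrightarrow> j = Suc i mod n \<or> i = Suc j mod n"

definition has_induced_cycle :: "'a set \<Rightarrow> ('a \<Rightarrow> 'a \<Rightarrow> bool) \<Rightarrow> nat \<Rightarrow> bool" where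
  "has_induced_cycle V E n \<longleftrightarrow> (\<exists>f. inj_on f {0..<n} \<and> f ` {0..<n} \<subseteq> V \<and>
      (\<forall>i<n. \<forall>j<n. E (f i) (f j) \<longleftrightarrow> cycle_adj n i j))"

definition induced_iso_path :: "('a \<Rightarrow> 'a \<Rightarrow> bool) \<Rightarrow> 'a set \<Rightarrow> nat \<Rightarrow> bool" where
  "induced_iso_path E C n \<longleftrightarrow> (\<exists>f. bij_betw f {0..<n} C \<and>
      (\<forall>i<n. \<forall>j<n. E (f i) (f j) \<longleftrightarrow> path_adj i j))"

definition induced_iso_cycle :: "('a \<Rightarrow> 'a \<Rightarrow> bool) \<Rightarrow> 'a set \<Rightarrow> nat \<Rightarrow> bool" where
  "induced_iso_cycle E C n \<longleftrightarrow> (\<exists>f. bij_betw f {0..<n} C \<and>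
      (\<forall>i<n. \<forall>j<n. E (f i) (f j) \<longleftrightarrow> cycle_adj n i j))"

definition indep :: "'a set \<Rightarrow> ('a \<Rightarrow> 'a \<Rightarrow> bool) \<Rightarrow> 'a set \<Rightarrow> bool" where
  "indep V E S \<longleftrightarrow> S \<subseteq> V \<and> (\<forall>x\<in>S. \<forall>y\<in>S. \<not> E x y)"

definition max_indep :: "'a set \<Rightarrow> ('a \<Rightarrow> 'a \<Rightarrow> bool) \<Rightarrow> 'a set \<Rightarrow> bool" where
  "max_indep V E S \<longleftrightarrow> indep V E S \<and> (\<forall>v\<in>V - S. \<not> indep V E (insert v S))"

definition alpha :: "'a set \<Rightarrow> ('a \<Rightarrow> 'a \<Rightarrow> bool) \<Rightarrow> nat" where
  "alpha V E = Max (card ` {S. indep V E S})"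

definition indep_dom :: "'a set \<Rightarrow> ('a \<Rightarrow> 'a \<Rightarrow> bool) \<Rightarrow> nat" where
  "indep_dom V E = Min (card ` {S. max_indep V E S})"

definition almost_well_covered :: "'a set \<Rightarrow> ('a \<Rightarrow> 'a \<Rightarrow> bool) \<Rightarrow> bool" where
  "almost_well_covered V E \<longleftrightarrow> int (alpha V E) - int (indep_dom V E) = 1"

text \<open>Connected component of x in the graph (V,E) (E assumed to live inside V).\<close>
definition component :: "('a \<Rightarrow> 'a \<Rightarrow> bool) \<Rightarrow> 'a \<Rightarrow> 'a set" where
  "component E x = {y. E\<^sup>*\<^sup>* x y}"

definition U_set :: "'a set \<Rightarrow> ('a \<Rightarrow> 'a \<Rightarrow> bool) \<Rightarrow> 'a set" where
  "U_set V E = {v \<in> V. \<forall>x\<in>component E v. \<forall>y\<in>component E v. x \<noteq> y \<longrightarrow> E x y}"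

definition deg_GU :: "'a set \<Rightarrow> ('a \<Rightarrow> 'a \<Rightarrow> bool) \<Rightarrow> 'a \<Rightarrow> nat" where
  "deg_GU V E v = card {u \<in> V - U_set V E. E v u}"

definition is_leaf :: "'a set \<Rightarrow> ('a \<Rightarrow> 'a \<Rightarrow> bool) \<Rightarrow> 'a \<Rightarrow> bool" where
  "is_leaf V E v \<longleftrightarrow> v \<in> V - U_set V E \<and> deg_GU V E v = 1"

definition is_internal :: "'a set \<Rightarrow> ('a \<Rightarrow> 'a \<Rightarrow> bool) \<Rightarrow> 'a \<Rightarrow> bool" where
  "is_internal V E v \<longleftrightarrow> v \<in> V - U_set V E \<and> deg_GU V E v \<noteq> 1"

definition has_type :: "'a set \<Rightarrow> ('a \<Rightarrow> 'a \<Rightarrow> bool) \<Rightarrow> 'a \<Rightarrow> nat \<Rightarrow> bool" where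
  "has_type V E v k \<longleftrightarrow> (v \<in> U_set V E \<and> k = 0) \<or>
     (is_internal V E v \<and> card {u \<in> V - U_set V E. E v u \<and> is_leaf V E u} = k)"

definition V0 :: "'a set \<Rightarrow> ('a \<Rightarrow> 'a \<Rightarrow> bool) \<Rightarrow> 'a set" where
  "V0 V E = {v \<in> V. has_type V E v 0}"

definition E0 :: "'a set \<Rightarrow> ('a \<Rightarrow> 'a \<Rightarrow> bool) \<Rightarrow> 'a \<Rightarrow> 'a \<Rightarrow> bool" where
  "E0 V E x y \<longleftrightarrow> E x y \<and> x \<in> V0 V E \<and> y \<in> V0 V E"

end

theory Submission
  imports Defs
begin

locale gr =
  fixes V :: "'a set" and E :: "'a \<Rightarrow> 'a \<Rightarrow> bool"
  assumes sg: "simple_graph V E"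
    and n3: "\<not> has_induced_cycle V E 3" and n4: "\<not> has_induced_cycle V E 4"
    and n5: "\<not> has_induced_cycle V E 5" and n7: "\<not> has_induced_cycle V E 7"
begin

lemma finV: "finite V" using sg unfolding simple_graph_def by blast
lemma EV: "E x y \<Longrightarrow> x \<in> V \<and> y \<in> V" using sg unfolding simple_graph_def by blast
lemma Esym: "E x y \<Longrightarrow> E y x" using sg unfolding simple_graph_def by blast
lemma Eirr: "\<not> E x x" using sg unfolding simple_graph_def by blast

lemma all3: "(\<forall>i<(3::nat). P i) \<longleftrightarrow> P 0 \<and> P 1 \<and> P 2"
  by (simp add: numeral_eq_Suc All_less_Suc2)

lemma t1: "E a b \<Longrightarrow> E b c \<Longrightarrow> E c a \<Longrightarrow> distinct [a,b,c]" using Eirr by auto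
lemma t2: "distinct [a,b,c] \<Longrightarrow> inj_on ((!) [a,b,c]) {0..<3}" by (intro inj_on_nth) auto
lemma t3: "((!) [a,b,c]) ` {0..<3} = set [a,b,c]" by (subst set_conv_nth) (auto simp: image_def)
lemma t4: "E a b \<Longrightarrow> E b c \<Longrightarrow> E c a \<Longrightarrow> E b a \<Longrightarrow> E c b \<Longrightarrow> E a c \<Longrightarrow> \<forall>i<3. \<forall>j<3. E ([a,b,c]!i) ([a,b,c]!j) = cycle_adj 3 i j"
  unfolding all3 using Eirr by (simp add: cycle_adj_def)
lemma mkcyc: assumes "distinct cs" "set cs \<subseteq> V" "length cs = n"
  "\<forall>i<n. \<forall>j<n. E (cs!i) (cs!j) = cycle_adj n i j"
  shows "has_induced_cycle V E n"
  unfolding has_induced_cycle_def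
proof (rule exI[of _ "(!) cs"], intro conjI)
  show "inj_on ((!) cs) {0..<n}" using assms by (intro inj_on_nth) auto
  show "(!) cs ` {0..<n} \<subseteq> V" using assms(2,3) nth_mem by fastforce
  show "\<forall>i<n. \<forall>j<n. E (cs!i) (cs!j) = cycle_adj n i j" by fact
qed

lemma no3: "E a b \<Longrightarrow> E b c \<Longrightarrow> E c a \<Longrightarrow> False"
  using mkcyc[of "[a,b,c]" 3] t1 t4 Esym EV n3 by fastforce
lemma all4: "(\<forall>i<(4::nat). P i) \<longleftrightarrow> P 0 \<and> P 1 \<and> P 2 \<and> P 3"
  by (simp add: numeral_eq_Suc All_less_Suc2)

lemma no4: "E a b \<Longrightarrow> E b c \<Longrightarrow> E c d \<Longrightarrow> E d a \<Longrightarrow> distinct [a,b,c,d] \<Longrightarrow> False"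
proof -
  assume h: "E a b" "E b c" "E c d" "E d a" and d: "distinct [a,b,c,d]"
  have hs: "E b a" "E c b" "E d c" "E a d" using h Esym by blast+
  have c0_2: "\<not> E a c"
  proof
    assume ch: "E a c"
    hence chs: "E c a" by (rule Esym)
    show False by (rule no3[of a b c]) (use h hs ch chs d in auto)
  qed
  have c1_3: "\<not> E b d"
  proof
    assume ch: "E b d"
    hence chs: "E d b" by (rule Esym)
    show False by (rule no3[of b c d]) (use h hs ch chs d in auto)
  qed
  have cs0: "\<not> E c a" using c0_2 Esym by blast
  have cs1: "\<not> E d b" using c1_3 Esym by blast
  note cs = cs0 cs1
  have "has_induced_cycle V E 4"
  proof (rule mkcyc[of "[a,b,c,d]"])
    show "distinct [a,b,c,d]" by (fact d)
    show "set [a,b,c,d] \<subseteq> V" using h EV by auto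
    show "length [a,b,c,d] = 4" by simp
    show "\<forall>i<4. \<forall>j<4. E ([a,b,c,d] ! i) ([a,b,c,d] ! j) = cycle_adj 4 i j"
      by (simp add: all4 cycle_adj_def h hs d cs c0_2 c1_3 Eirr)
  qed
  thus False using n4 by simp
qed

lemma all5: "(\<forall>i<(5::nat). P i) \<longleftrightarrow> P 0 \<and> P 1 \<and> P 2 \<and> P 3 \<and> P 4"
  by (simp add: numeral_eq_Suc All_less_Suc2)

lemma no5: "E a b \<Longrightarrow> E b c \<Longrightarrow> E c d \<Longrightarrow> E d e \<Longrightarrow> E e a \<Longrightarrow> distinct [a,b,c,d,e] \<Longrightarrow> False"
proof -
  assume h: "E a b" "E b c" "E c d" "E d e" "E e a" and d: "distinct [a,b,c,d,e]"
  have hs: "E b a" "E c b" "E d c" "E e d" "E a e" using h Esym by blast+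
  have c0_2: "\<not> E a c"
  proof
    assume ch: "E a c"
    hence chs: "E c a" by (rule Esym)
    show False by (rule no3[of a b c]) (use h hs ch chs d in auto)
  qed
  have c0_3: "\<not> E a d"
  proof
    assume ch: "E a d"
    hence chs: "E d a" by (rule Esym)
    show False by (rule no3[of d e a]) (use h hs ch chs d in auto)
  qed
  have c1_3: "\<not> E b d"
  proof
    assume ch: "E b d"
    hence chs: "E d b" by (rule Esym)
    show False by (rule no3[of b c d]) (use h hs ch chs d in auto)
  qed
  have c1_4: "\<not> E b e"
  proof
    assume ch: "E b e"
    hence chs: "E e b" by (rule Esym)
    show False by (rule no3[of e a b]) (use h hs ch chs d in auto)
  qed
  have c2_4: "\<not> E c e"
  proof
    assume ch: "E c e"
    hence chs: "E e c" by (rule Esym)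
    show False by (rule no3[of c d e]) (use h hs ch chs d in auto)
  qed
  have cs0: "\<not> E c a" using c0_2 Esym by blast
  have cs1: "\<not> E d a" using c0_3 Esym by blast
  have cs2: "\<not> E d b" using c1_3 Esym by blast
  have cs3: "\<not> E e b" using c1_4 Esym by blast
  have cs4: "\<not> E e c" using c2_4 Esym by blast
  note cs = cs0 cs1 cs2 cs3 cs4
  have "has_induced_cycle V E 5"
  proof (rule mkcyc[of "[a,b,c,d,e]"])
    show "distinct [a,b,c,d,e]" by (fact d)
    show "set [a,b,c,d,e] \<subseteq> V" using h EV by auto
    show "length [a,b,c,d,e] = 5" by simp
    show "\<forall>i<5. \<forall>j<5. E ([a,b,c,d,e] ! i) ([a,b,c,d,e] ! j) = cycle_adj 5 i j"
      by (simp add: all5 cycle_adj_def h hs d cs c0_2 c0_3 c1_3 c1_4 c2_4 Eirr)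
  qed
  thus False using n5 by simp
qed

lemma all7: "(\<forall>i<(7::nat). P i) \<longleftrightarrow> P 0 \<and> P 1 \<and> P 2 \<and> P 3 \<and> P 4 \<and> P 5 \<and> P 6"
  by (simp add: numeral_eq_Suc All_less_Suc2)

lemma no7: "E a b \<Longrightarrow> E b c \<Longrightarrow> E c d \<Longrightarrow> E d e \<Longrightarrow> E e f \<Longrightarrow> E f g \<Longrightarrow> E g a \<Longrightarrow> distinct [a,b,c,d,e,f,g] \<Longrightarrow> False"
proof -
  assume h: "E a b" "E b c" "E c d" "E d e" "E e f" "E f g" "E g a" and d: "distinct [a,b,c,d,e,f,g]"
  have hs: "E b a" "E c b" "E d c" "E e d" "E f e" "E g f" "E a g" using h Esym by blast+
  have c0_2: "\<not> E a c"
  proof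
    assume ch: "E a c"
    hence chs: "E c a" by (rule Esym)
    show False by (rule no3[of a b c]) (use h hs ch chs d in auto)
  qed
  have c0_3: "\<not> E a d"
  proof
    assume ch: "E a d"
    hence chs: "E d a" by (rule Esym)
    show False by (rule no4[of a b c d]) (use h hs ch chs d in auto)
  qed
  have c0_4: "\<not> E a e"
  proof
    assume ch: "E a e"
    hence chs: "E e a" by (rule Esym)
    show False by (rule no4[of e f g a]) (use h hs ch chs d in auto)
  qed
  have c0_5: "\<not> E a f"
  proof
    assume ch: "E a f"
    hence chs: "E f a" by (rule Esym)
    show False by (rule no3[of f g a]) (use h hs ch chs d in auto)
  qed
  have c1_3: "\<not> E b d"
  proof
    assume ch: "E b d"
    hence chs: "E d b" by (rule Esym)
    show False by (rule no3[of b c d]) (use h hs ch chs d in auto)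
  qed
  have c1_4: "\<not> E b e"
  proof
    assume ch: "E b e"
    hence chs: "E e b" by (rule Esym)
    show False by (rule no4[of b c d e]) (use h hs ch chs d in auto)
  qed
  have c1_5: "\<not> E b f"
  proof
    assume ch: "E b f"
    hence chs: "E f b" by (rule Esym)
    show False by (rule no4[of f g a b]) (use h hs ch chs d in auto)
  qed
  have c1_6: "\<not> E b g"
  proof
    assume ch: "E b g"
    hence chs: "E g b" by (rule Esym)
    show False by (rule no3[of g a b]) (use h hs ch chs d in auto)
  qed
  have c2_4: "\<not> E c e"
  proof
    assume ch: "E c e"
    hence chs: "E e c" by (rule Esym)
    show False by (rule no3[of c d e]) (use h hs ch chs d in auto)
  qed
  have c2_5: "\<not> E c f"
  proof
    assume ch: "E c f"
    hence chs: "E f c" by (rule Esym)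
    show False by (rule no4[of c d e f]) (use h hs ch chs d in auto)
  qed
  have c2_6: "\<not> E c g"
  proof
    assume ch: "E c g"
    hence chs: "E g c" by (rule Esym)
    show False by (rule no4[of g a b c]) (use h hs ch chs d in auto)
  qed
  have c3_5: "\<not> E d f"
  proof
    assume ch: "E d f"
    hence chs: "E f d" by (rule Esym)
    show False by (rule no3[of d e f]) (use h hs ch chs d in auto)
  qed
  have c3_6: "\<not> E d g"
  proof
    assume ch: "E d g"
    hence chs: "E g d" by (rule Esym)
    show False by (rule no4[of d e f g]) (use h hs ch chs d in auto)
  qed
  have c4_6: "\<not> E e g"
  proof
    assume ch: "E e g"
    hence chs: "E g e" by (rule Esym)
    show False by (rule no3[of e f g]) (use h hs ch chs d in auto)
  qed
  have cs0: "\<not> E c a" using c0_2 Esym by blast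
  have cs1: "\<not> E d a" using c0_3 Esym by blast
  have cs2: "\<not> E e a" using c0_4 Esym by blast
  have cs3: "\<not> E f a" using c0_5 Esym by blast
  have cs4: "\<not> E d b" using c1_3 Esym by blast
  have cs5: "\<not> E e b" using c1_4 Esym by blast
  have cs6: "\<not> E f b" using c1_5 Esym by blast
  have cs7: "\<not> E g b" using c1_6 Esym by blast
  have cs8: "\<not> E e c" using c2_4 Esym by blast
  have cs9: "\<not> E f c" using c2_5 Esym by blast
  have cs10: "\<not> E g c" using c2_6 Esym by blast
  have cs11: "\<not> E f d" using c3_5 Esym by blast
  have cs12: "\<not> E g d" using c3_6 Esym by blast
  have cs13: "\<not> E g e" using c4_6 Esym by blast
  note cs = cs0 cs1 cs2 cs3 cs4 cs5 cs6 cs7 cs8 cs9 cs10 cs11 cs12 cs13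
  have "has_induced_cycle V E 7"
  proof (rule mkcyc[of "[a,b,c,d,e,f,g]"])
    show "distinct [a,b,c,d,e,f,g]" by (fact d)
    show "set [a,b,c,d,e,f,g] \<subseteq> V" using h EV by auto
    show "length [a,b,c,d,e,f,g] = 7" by simp
    show "\<forall>i<7. \<forall>j<7. E ([a,b,c,d,e,f,g] ! i) ([a,b,c,d,e,f,g] ! j) = cycle_adj 7 i j"
      by (simp add: all7 cycle_adj_def h hs d cs c0_2 c0_3 c0_4 c0_5 c1_3 c1_4 c1_5 c1_6 c2_4 c2_5 c2_6 c3_5 c3_6 c4_6 Eirr)
  qed
  thus False using n7 by simp
qed




abbreviation "UU \<equiv> U_set V E"
abbreviation "L \<equiv> {v. is_leaf V E v}"
definition "Supp = {v \<in> V. v \<notin> UU \<and> \<not> is_leaf V E v \<and> (\<exists>l. is_leaf V E l \<and> E v l)}"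
abbreviation "VZ \<equiv> V0 V E"

lemma rt_sym: "E\<^sup>*\<^sup>* a b \<Longrightarrow> E\<^sup>*\<^sup>* b a"
proof (induction rule: rtranclp_induct)
  case base then show ?case by simp
next
  case (step y z) then show ?case by (meson Esym converse_rtranclp_into_rtranclp)
qed

lemma comp_eq: "E\<^sup>*\<^sup>* a b \<Longrightarrow> component E a = component E b"
  unfolding component_def using rt_sym by (auto intro: rtranclp_trans)

lemma U_closed: "E a b \<Longrightarrow> a \<in> UU \<longleftrightarrow> b \<in> UU"
  using comp_eq[of a b] EV[of a b] unfolding U_set_def by auto

lemma nbr_nonU: "v \<notin> UU \<Longrightarrow> E v u \<Longrightarrow> u \<in> V - UU"
  using U_closed EV by blast

lemma deg_eq: "v \<notin> UU \<Longrightarrow> deg_GU V E v = card {u. E v u}"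
  unfolding deg_GU_def using nbr_nonU by (metis (no_types, lifting) mem_Collect_eq)

lemma finN: "finite {u. E v u}"
  using finV EV by (metis (no_types, lifting) mem_Collect_eq rev_finite_subset subsetI)

lemma comp_closed: "(\<And>y z. y \<in> A \<Longrightarrow> E y z \<Longrightarrow> z \<in> A) \<Longrightarrow> v \<in> A \<Longrightarrow> component E v \<subseteq> A"
proof
  fix w assume h: "\<And>y z. y \<in> A \<Longrightarrow> E y z \<Longrightarrow> z \<in> A" "v \<in> A" "w \<in> component E v"
  hence "E\<^sup>*\<^sup>* v w" unfolding component_def by simp
  thus "w \<in> A" by (induction rule: rtranclp_induct) (use h in auto)
qed

lemma self_comp: "v \<in> component E v" unfolding component_def by simp

lemma nonU_has_nbr: "v \<in> V \<Longrightarrow> v \<notin> UU \<Longrightarrow> \<exists>u. E v u"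
proof (rule ccontr)
  assume h: "v \<in> V" "v \<notin> UU" "\<nexists>u. E v u"
  have "component E v \<subseteq> {v}" by (rule comp_closed) (use h in auto)
  hence "component E v = {v}" using self_comp by auto
  thus False using h unfolding U_set_def by auto
qed

lemma leaf_nbr: assumes "is_leaf V E l" shows "\<exists>s. {u. E l u} = {s}"
proof -
  have "l \<notin> UU" "deg_GU V E l = 1" using assms unfolding is_leaf_def by auto
  thus ?thesis using deg_eq by (metis card_1_singletonE)
qed

lemma leaf_V: "is_leaf V E l \<Longrightarrow> l \<in> V \<and> l \<notin> UU" unfolding is_leaf_def by auto

lemma leaf_supp: assumes "is_leaf V E l" "E l s" shows "s \<in> Supp"
proof -
  obtain s' where s': "{u. E l u} = {s'}" using leaf_nbr assms(1) by blast
  have ss: "s' = s" using s' assms(2) by auto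
  have lU: "l \<in> V" "l \<notin> UU" using leaf_V assms(1) by auto
  have sV: "s \<in> V" "s \<notin> UU" using nbr_nonU lU assms(2) by auto
  have "\<not> is_leaf V E s"
  proof
    assume sl: "is_leaf V E s"
    obtain t where t: "{u. E s u} = {t}" using leaf_nbr sl by blast
    have "t = l" using t Esym[OF assms(2)] by auto
    have "component E l \<subseteq> {l, s}"
      by (rule comp_closed) (use s' ss t \<open>t = l\<close> in auto)
    hence "\<forall>a\<in>component E l. \<forall>b\<in>component E l. a \<noteq> b \<longrightarrow> E a b"
      using assms(2) Esym[OF assms(2)] by auto
    hence "l \<in> UU" using lU unfolding U_set_def by auto
    thus False using lU by simp
  qed
  moreover have "E s l" using Esym assms(2) by blast
  ultimately show ?thesis unfolding Supp_def using sV assms(1) by auto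
qed

lemma leaf_nonadj: "is_leaf V E l \<Longrightarrow> is_leaf V E l' \<Longrightarrow> \<not> E l l'"
  using leaf_supp Supp_def by blast

lemma UU_V: "v \<in> UU \<Longrightarrow> v \<in> V" unfolding U_set_def by blast
lemma UU_V0: "v \<in> UU \<Longrightarrow> v \<in> VZ"
  unfolding V0_def has_type_def using UU_V by blast

lemma V0_nonU: assumes "v \<in> VZ" "v \<notin> UU"
  shows "is_internal V E v" "\<And>u. E v u \<Longrightarrow> \<not> is_leaf V E u"
proof -
  have h: "is_internal V E v" "card {u \<in> V - UU. E v u \<and> is_leaf V E u} = 0"
    using assms unfolding V0_def has_type_def by auto
  show "is_internal V E v" by (fact h(1))
  have "finite {u \<in> V - UU. E v u \<and> is_leaf V E u}" using finV by auto
  hence "{u \<in> V - UU. E v u \<and> is_leaf V E u} = {}" using h(2) by simp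
  thus "\<And>u. E v u \<Longrightarrow> \<not> is_leaf V E u" using leaf_V by blast
qed

lemma V0_nbr: assumes "v \<in> VZ" "E v u" shows "\<not> is_leaf V E u"
proof (cases "v \<in> UU")
  case True then show ?thesis using U_closed assms leaf_V by blast
next
  case False then show ?thesis using V0_nonU assms by blast
qed

lemma V0_two_nbrs: assumes "v \<in> VZ" "v \<notin> UU" "E v p"
  shows "\<exists>y. E v y \<and> y \<noteq> p"
proof (rule ccontr)
  assume "\<not> ?thesis"
  hence "{u. E v u} = {p}" using assms(3) by blast
  hence "deg_GU V E v = 1" using deg_eq assms(2) by simp
  thus False using V0_nonU(1)[OF assms(1,2)] unfolding is_internal_def by simp
qed

lemma classify: "v \<in> V \<Longrightarrow> is_leaf V E v \<or> v \<in> VZ \<or> v \<in> Supp"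
proof -
  assume v: "v \<in> V"
  show ?thesis
  proof (cases "is_leaf V E v \<or> v \<in> VZ \<or> v \<in> UU")
    case True then show ?thesis using UU_V0 by blast
  next
    case False
    hence int: "is_internal V E v" using v unfolding is_internal_def is_leaf_def by auto
    hence "card {u \<in> V - UU. E v u \<and> is_leaf V E u} \<noteq> 0"
      using False v unfolding V0_def has_type_def by auto
    hence "{u \<in> V - UU. E v u \<and> is_leaf V E u} \<noteq> {}" by (metis card.empty)
    hence "\<exists>l. is_leaf V E l \<and> E v l" by blast
    thus ?thesis using False v unfolding Supp_def by auto
  qed
qed

lemma Supp_not_V0: "v \<in> Supp \<Longrightarrow> v \<notin> VZ"
  unfolding Supp_def using V0_nbr by blast

lemma V0_V: "v \<in> VZ \<Longrightarrow> v \<in> V" unfolding V0_def by auto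

lemma leaf_not_V0: "is_leaf V E l \<Longrightarrow> l \<notin> VZ"
  unfolding V0_def has_type_def is_leaf_def is_internal_def by auto

lemma V0_nbr_cases: "v \<in> VZ \<Longrightarrow> E v u \<Longrightarrow> u \<in> VZ \<or> u \<in> Supp"
  using classify EV V0_nbr by blast

lemma maxext: assumes "finite A" "I \<subseteq> A" "\<forall>a\<in>I. \<forall>b\<in>I. \<not> E a b"
  shows "\<exists>K. I \<subseteq> K \<and> K \<subseteq> A \<and> (\<forall>a\<in>K. \<forall>b\<in>K. \<not> E a b) \<and> (\<forall>a\<in>A - K. \<exists>k\<in>K. E a k)"
proof -
  let ?P = "\<lambda>K. I \<subseteq> K \<and> K \<subseteq> A \<and> (\<forall>a\<in>K. \<forall>b\<in>K. \<not> E a b)"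
  have "\<forall>K. ?P K \<longrightarrow> card K < card A + 1" using assms(1) by (auto intro: card_mono simp: less_Suc_eq_le)
  then obtain K where K: "?P K" "\<forall>K'. ?P K' \<longrightarrow> card K' \<le> card K"
    using ex_has_greatest_nat[of ?P I card "card A + 1"] assms by blast
  have "\<forall>a\<in>A - K. \<exists>k\<in>K. E a k"
  proof (rule ccontr)
    assume "\<not> ?thesis"
    then obtain a where a: "a \<in> A - K" "\<forall>k\<in>K. \<not> E a k" by blast
    have ka: "\<forall>k\<in>K. \<not> E k a"
    proof (intro ballI notI)
      fix k assume "k \<in> K" and eka: "E k a"
      from eka have "E a k" by (rule Esym)
      thus False using a(2) \<open>k \<in> K\<close> by blast
    qed
    have "?P (insert a K)"
    proof (intro conjI)
      show "I \<subseteq> insert a K" "insert a K \<subseteq> A" using K(1) a(1) by auto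
      show "\<forall>x\<in>insert a K. \<forall>y\<in>insert a K. \<not> E x y"
        using K(1) a(2) ka Eirr by blast
    qed
    moreover have "finite K" using K(1) assms(1) finite_subset by blast
    moreover have "card (insert a K) = Suc (card K)" using \<open>finite K\<close> a(1) by simp
    ultimately show False using K(2) by (metis Suc_n_not_le_n)
  qed
  thus ?thesis using K(1) by blast
qed



lemma fin_indeps: "finite {S. indep V E S}"
  by (rule finite_subset[of _ "Pow V"]) (auto simp: indep_def finV)

lemma alpha_ge: "indep V E S \<Longrightarrow> card S \<le> alpha V E"
  unfolding alpha_def using fin_indeps by (auto intro: Max_ge)

lemma dom_le: "max_indep V E S \<Longrightarrow> indep_dom V E \<le> card S"
proof -
  assume "max_indep V E S"
  moreover have "finite {S. max_indep V E S}"
    by (rule finite_subset[OF _ fin_indeps]) (auto simp: max_indep_def)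
  ultimately show ?thesis unfolding indep_dom_def by (auto intro: Min_le)
qed

lemma E0_comp: assumes "x \<in> VZ" "y \<in> component (E0 V E) x" shows "y \<in> VZ"
proof -
  have "(E0 V E)\<^sup>*\<^sup>* x y" using assms(2) unfolding component_def by simp
  thus ?thesis using assms(1) by (induction rule: rtranclp_induct) (auto simp: E0_def)
qed

lemma E0_closed: "x \<in> VZ \<Longrightarrow> y \<in> component (E0 V E) x \<Longrightarrow> z \<in> VZ \<Longrightarrow> E y z
   \<Longrightarrow> z \<in> component (E0 V E) x"
proof -
  assume h: "x \<in> VZ" "y \<in> component (E0 V E) x" "z \<in> VZ" "E y z"
  have "y \<in> VZ" using E0_comp h by blast
  hence "E0 V E y z" using h unfolding E0_def by blast
  thus ?thesis using h(2) unfolding component_def by (simp add: rtranclp.rtrancl_into_rtrancl)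
qed

lemma indepI: "S \<subseteq> V \<Longrightarrow> (\<forall>a\<in>S. \<forall>b\<in>S. \<not> E a b) \<Longrightarrow> indep V E S"
  unfolding indep_def by blast

lemma key:
  assumes awc: "almost_well_covered V E" and x: "x \<in> VZ"
    and Cd: "C = component (E0 V E) x"
    and T: "T \<subseteq> Supp" "\<forall>a\<in>T. \<forall>b\<in>T. \<not> E a b"
    and M: "M \<subseteq> C" "\<forall>a\<in>M. \<forall>b\<in>M. \<not> E a b" "\<forall>m\<in>M. \<forall>t\<in>T. \<not> E m t"
      "\<forall>c\<in>C. (\<forall>t\<in>T. \<not> E c t) \<longrightarrow> c \<in> M \<or> (\<exists>m\<in>M. E c m)"
    and J: "J \<subseteq> C" "\<forall>a\<in>J. \<forall>b\<in>J. \<not> E a b"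
  shows "card J \<le> card M + 1"
proof -
  have CV0: "C \<subseteq> VZ" using E0_comp x Cd by blast
  have Cclo: "\<And>y z. y \<in> C \<Longrightarrow> z \<in> VZ \<Longrightarrow> E y z \<Longrightarrow> z \<in> C" using E0_closed x Cd by blast
  have V0V: "VZ \<subseteq> V" using V0_V by blast
  have SuppV: "Supp \<subseteq> V" unfolding Supp_def by blast
  have LV: "L \<subseteq> V" using leaf_V by blast
  define R where "R = (VZ - C) - {v. \<exists>t\<in>T. E v t}"
  have finR: "finite R" using finV V0V unfolding R_def by (meson Diff_subset finite_subset)
  obtain Mr where Mr: "Mr \<subseteq> R" "\<forall>a\<in>Mr. \<forall>b\<in>Mr. \<not> E a b" "\<forall>a\<in>R - Mr. \<exists>k\<in>Mr. E a k"
    using maxext[OF finR, of "{}"] by auto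
  define LT where "LT = {l \<in> L. \<forall>t\<in>T. \<not> E l t}"
  define LTc where "LTc = {l \<in> L. \<exists>t\<in>T. E l t}"
  define S where "S = T \<union> LT \<union> M \<union> Mr"
  have leafV0: "\<And>l v. is_leaf V E l \<Longrightarrow> v \<in> VZ \<Longrightarrow> \<not> E l v \<and> \<not> E v l"
  proof -
    fix l v assume l: "is_leaf V E l" and v: "v \<in> VZ"
    have "\<not> E v l" using V0_nbr[OF v] l by blast
    moreover have "\<not> E l v" using leaf_supp[OF l] Supp_not_V0 v by blast
    ultimately show "\<not> E l v \<and> \<not> E v l" by blast
  qed
  have MrC: "\<And>a b. a \<in> C \<Longrightarrow> b \<in> Mr \<Longrightarrow> \<not> E a b \<and> \<not> E b a"
  proof -
    fix a b assume a: "a \<in> C" and b: "b \<in> Mr"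
    have bV: "b \<in> VZ" "b \<notin> C" using b Mr(1) unfolding R_def by auto
    have "\<not> E a b" using Cclo a bV by blast
    moreover have "\<not> E b a" using Cclo[OF a bV(1)] bV(2) Esym by blast
    ultimately show "\<not> E a b \<and> \<not> E b a" by blast
  qed
  have indS: "indep V E S"
  proof (rule indepI)
    show "S \<subseteq> V" unfolding S_def LT_def using T(1) SuppV LV M(1) CV0 V0V Mr(1) unfolding R_def by blast
    show "\<forall>a\<in>S. \<forall>b\<in>S. \<not> E a b"
    proof (intro ballI)
      fix a b assume a: "a \<in> S" and b: "b \<in> S"
      have Tsym: "\<And>t y. t \<in> T \<Longrightarrow> y \<in> LT \<union> M \<union> Mr \<Longrightarrow> \<not> E t y \<and> \<not> E y t"
      proof -
        fix t y assume t: "t \<in> T" and y: "y \<in> LT \<union> M \<union> Mr"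
        have "\<not> E y t" using y t M(3) Mr(1) unfolding LT_def R_def by blast
        moreover have "\<not> E t y"
        proof
          assume "E t y" hence "E y t" by (rule Esym)
          thus False using \<open>\<not> E y t\<close> by blast
        qed
        ultimately show "\<not> E t y \<and> \<not> E y t" by blast
      qed
      have LTo: "\<And>l y. l \<in> LT \<Longrightarrow> y \<in> LT \<union> M \<union> Mr \<Longrightarrow> \<not> E l y \<and> \<not> E y l"
      proof -
        fix l y assume l: "l \<in> LT" and y: "y \<in> LT \<union> M \<union> Mr"
        have lf: "is_leaf V E l" using l unfolding LT_def by blast
        show "\<not> E l y \<and> \<not> E y l"
        proof (cases "y \<in> LT")
          case True
          hence "is_leaf V E y" unfolding LT_def by blast
          thus ?thesis using leaf_nonadj lf by blast
        next
          case False
          hence "y \<in> VZ" using y M(1) CV0 Mr(1) unfolding R_def by blast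
          thus ?thesis using leafV0 lf by blast
        qed
      qed
      have MM: "\<And>y z. y \<in> M \<union> Mr \<Longrightarrow> z \<in> M \<union> Mr \<Longrightarrow> \<not> E y z"
        using M(1,2) Mr(2) MrC by blast
      show "\<not> E a b"
        using a b Tsym LTo MM T(2) unfolding S_def by blast
    qed
  qed
  have maxS: "max_indep V E S"
    unfolding max_indep_def
  proof (intro conjI ballI)
    show "indep V E S" by (fact indS)
    fix v assume v: "v \<in> V - S"
    have "\<exists>s\<in>S. E v s"
    proof -
      consider "is_leaf V E v" | "v \<in> VZ" | "v \<in> Supp" using classify v by blast
      thus ?thesis
      proof cases
        case 1
        hence "v \<notin> LT" using v unfolding S_def by blast
        then obtain t where "t \<in> T" "E v t" using 1 unfolding LT_def by blast
        thus ?thesis unfolding S_def by blast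
      next
        case 3
        then obtain l where l: "is_leaf V E l" "E v l" unfolding Supp_def by blast
        have "l \<in> LT"
        proof (rule ccontr)
          assume "l \<notin> LT"
          then obtain t where t: "t \<in> T" "E l t" using l(1) unfolding LT_def by blast
          obtain s where s: "{u. E l u} = {s}" using leaf_nbr l(1) by blast
          have "E l v" using l(2) by (rule Esym)
          hence "t = v" using s t(2) by (metis mem_Collect_eq singletonD)
          thus False using t v unfolding S_def by blast
        qed
        thus ?thesis using l unfolding S_def by blast
      next
        case 2
        show ?thesis
        proof (cases "\<exists>t\<in>T. E v t")
          case True thus ?thesis unfolding S_def by blast
        next
          case False
          show ?thesis
          proof (cases "v \<in> C")
            case True
            hence "v \<in> M \<or> (\<exists>m\<in>M. E v m)" using M(4) False by blast
            thus ?thesis using v unfolding S_def by blast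
          next
            case vC: False
            hence "v \<in> R - Mr" using 2 False v unfolding R_def S_def by blast
            thus ?thesis using Mr(3) unfolding S_def by blast
          qed
        qed
      qed
    qed
    then obtain s where s: "s \<in> S" "E v s" by blast
    show "\<not> indep V E (insert v S)"
      unfolding indep_def using s by blast
  qed
  have finL: "finite L" using finV LV finite_subset by blast
  have finSS: "finite S" using indS finV unfolding indep_def by (meson finite_subset)
  have finS: "finite T" "finite LT" "finite M" "finite Mr" "finite LTc"
    by (rule finite_subset[OF _ finSS], unfold S_def, blast)+
      (rule finite_subset[OF _ finL], unfold LTc_def, blast)
  have c1: "card S \<le> card T + card LT + card M + card Mr"
    unfolding S_def using card_Un_le[of "T \<union> LT \<union> M" Mr] card_Un_le[of "T \<union> LT" M] card_Un_le[of T LT] by linarith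
  have c2: "card T \<le> card LTc"
  proof -
    define g where "g = (\<lambda>t. SOME l. is_leaf V E l \<and> E t l)"
    have gl: "\<And>t. t \<in> T \<Longrightarrow> is_leaf V E (g t) \<and> E t (g t)"
    proof -
      fix t assume "t \<in> T"
      hence "\<exists>l. is_leaf V E l \<and> E t l" using T(1) unfolding Supp_def by blast
      thus "is_leaf V E (g t) \<and> E t (g t)" unfolding g_def by (rule someI_ex)
    qed
    have "inj_on g T"
    proof (rule inj_onI)
      fix a b assume ab: "a \<in> T" "b \<in> T" "g a = g b"
      obtain s where s: "{u. E (g a) u} = {s}" using leaf_nbr gl[OF ab(1)] by blast
      have "E (g a) a" using gl[OF ab(1)] Esym by blast
      moreover have "E (g a) b" using gl[OF ab(2)] ab(3) Esym by metis
      ultimately show "a = b" using s by (metis mem_Collect_eq singletonD)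
    qed
    moreover have "g ` T \<subseteq> LTc"
    proof (rule image_subsetI)
      fix t assume t: "t \<in> T"
      have "E (g t) t" using gl[OF t] by (blast intro: Esym)
      thus "g t \<in> LTc" unfolding LTc_def using gl[OF t] t by blast
    qed
    ultimately show ?thesis using card_inj_on_le finS(5) by blast
  qed
  have c3: "card LT + card LTc = card L"
  proof -
    have "LT \<union> LTc = L" "LT \<inter> LTc = {}" unfolding LT_def LTc_def by blast+
    moreover have "card (LT \<union> LTc) = card LT + card LTc"
      using card_Un_disjoint[OF finS(2) finS(5)] \<open>LT \<inter> LTc = {}\<close> by blast
    ultimately show ?thesis by simp
  qed
  have c4: "card (L \<union> J \<union> Mr) = card L + card J + card Mr"
  proof -
    have "J \<subseteq> V" using J(1) CV0 V0V by blast
    hence finJ: "finite J" using finV by (rule finite_subset)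
    have d1: "L \<inter> J = {}" using J(1) CV0 leaf_not_V0 by blast
    have d2: "(L \<union> J) \<inter> Mr = {}" using Mr(1) leaf_not_V0 J(1) unfolding R_def by blast
    show ?thesis using card_Un_disjoint[OF finite_UnI[OF finL finJ] finS(4) d2]
        card_Un_disjoint[OF finL finJ d1] by simp
  qed
  have indJ: "indep V E (L \<union> J \<union> Mr)"
  proof (rule indepI)
    show "L \<union> J \<union> Mr \<subseteq> V" using LV J(1) CV0 V0V Mr(1) unfolding R_def by blast
    have JV: "J \<union> Mr \<subseteq> VZ" using J(1) CV0 Mr(1) unfolding R_def by blast
    show "\<forall>a\<in>L \<union> J \<union> Mr. \<forall>b\<in>L \<union> J \<union> Mr. \<not> E a b"
    proof (intro ballI)
      fix a b assume a: "a \<in> L \<union> J \<union> Mr" and b: "b \<in> L \<union> J \<union> Mr"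
      show "\<not> E a b"
      proof (cases "a \<in> L")
        case True
        thus ?thesis using b leaf_nonadj leafV0 JV by blast
      next
        case aL: False
        show ?thesis
        proof (cases "b \<in> L")
          case True thus ?thesis using a aL leafV0 JV by blast
        next
          case False
          thus ?thesis using a b aL J(1,2) Mr(2) MrC by blast
        qed
      qed
    qed
  qed
  have "int (alpha V E) - int (indep_dom V E) = 1" using awc unfolding almost_well_covered_def .
  hence "alpha V E = indep_dom V E + 1" by linarith
  moreover have "card (L \<union> J \<union> Mr) \<le> alpha V E" using alpha_ge indJ by blast
  moreover have "indep_dom V E \<le> card S" using dom_le maxS by blast
  ultimately show ?thesis using c1 c2 c3 c4 by linarith
qed



lemma E0_le: "(E0 V E)\<^sup>*\<^sup>* a b \<Longrightarrow> E\<^sup>*\<^sup>* a b"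
  by (induction rule: rtranclp_induct) (auto simp: E0_def intro: rtranclp.rtrancl_into_rtrancl)

lemma U_comp: assumes "a \<in> V" "b \<in> V" "E\<^sup>*\<^sup>* a b" shows "a \<in> UU \<longleftrightarrow> b \<in> UU"
  using comp_eq[OF assms(3)] assms(1,2) unfolding U_set_def by auto

lemma C_Ustat: assumes "x \<in> VZ" "w \<in> component (E0 V E) x" shows "w \<in> UU \<longleftrightarrow> x \<in> UU"
proof -
  have "E\<^sup>*\<^sup>* x w" using assms(2) E0_le unfolding component_def by simp
  moreover have "w \<in> V" "x \<in> V" using E0_comp assms V0_V by blast+
  ultimately show ?thesis using U_comp by blast
qed

lemma deg2:
  assumes awc: "almost_well_covered V E" and x: "x \<in> VZ"
    and Cd: "C = component (E0 V E) x"
    and u: "u \<in> C" and abc: "a \<in> C" "b \<in> C" "c \<in> C" "E u a" "E u b" "E u c"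
    and dist: "a \<noteq> b" "a \<noteq> c" "b \<noteq> c"
  shows False
proof (cases "u \<in> UU")
  case True
  have "E\<^sup>*\<^sup>* u a" "E\<^sup>*\<^sup>* u b" using abc by auto
  hence "a \<in> component E u" "b \<in> component E u" unfolding component_def by auto
  hence "E a b" using True dist unfolding U_set_def by blast
  moreover have "E b u" using abc(5) by (rule Esym)
  ultimately show False using no3[of u a b] abc(4) by blast
next
  case uU: False
  have CV0: "C \<subseteq> VZ" using E0_comp x Cd by blast
  have CnU: "\<And>w. w \<in> C \<Longrightarrow> w \<notin> UU" using C_Ustat x Cd u uU by blast
  have Cclo: "\<And>y z. y \<in> C \<Longrightarrow> z \<in> VZ \<Longrightarrow> E y z \<Longrightarrow> z \<in> C" using E0_closed x Cd by blast
  have CV: "C \<subseteq> V" using CV0 V0_V by blast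
  have finC: "finite C" using CV finV finite_subset by blast
  have SnC: "\<And>z. z \<in> Supp \<Longrightarrow> z \<notin> C" using Supp_not_V0 CV0 by blast
  define P where "P = {p \<in> C. E u p}"
  define X where "X = {y \<in> C. y \<notin> P \<and> y \<noteq> u \<and> (\<exists>p\<in>P. E p y)}"
  define W where "W = C - P - X - {u}"
  define Z where "Z = {z \<in> Supp. \<exists>y\<in>X. E z y}"
  define NT where "NT = {v. \<exists>t\<in>Z. E v t}"
  define Y where "Y = {y \<in> W. \<exists>z\<in>X. E z y}"
  have uP: "u \<notin> P" unfolding P_def using Eirr by blast
  have Pind: "\<And>p q. p \<in> P \<Longrightarrow> q \<in> P \<Longrightarrow> \<not> E p q"
  proof
    fix p q assume pq: "p \<in> P" "q \<in> P" "E p q"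
    have "E q u" using pq(2) unfolding P_def by (blast intro: Esym)
    thus False using no3[of u p q] pq unfolding P_def by blast
  qed
  have XqqX: "\<And>x1 x2 q1 q2. x1 \<in> X \<Longrightarrow> x2 \<in> X \<Longrightarrow> q1 \<notin> insert u (P \<union> X) \<Longrightarrow>
      q2 \<notin> insert u (P \<union> X) \<Longrightarrow> E x1 q1 \<Longrightarrow> E q1 q2 \<Longrightarrow> E q2 x2 \<Longrightarrow> False"
  proof -
    fix x1 x2 q1 q2 assume h: "x1 \<in> X" "x2 \<in> X" "q1 \<notin> insert u (P \<union> X)"
      "q2 \<notin> insert u (P \<union> X)" "E x1 q1" "E q1 q2" "E q2 x2"
    obtain p1 where p1: "p1 \<in> P" "E p1 x1" using h(1) unfolding X_def by blast
    obtain p2 where p2: "p2 \<in> P" "E p2 x2" using h(2) unfolding X_def by blast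
    have up1: "E u p1" "E u p2" using p1 p2 unfolding P_def by auto
    have q12: "q1 \<noteq> q2" using h(6) Eirr by blast
    have xP: "x1 \<notin> P" "x2 \<notin> P" "x1 \<noteq> u" "x2 \<noteq> u" using h(1,2) unfolding X_def by auto
    show False
    proof (cases "x1 = x2")
      case True
      thus False using no3[of x1 q1 q2] h(5,6,7) by blast
    next
      case x12: False
      have e2: "E x2 p2" using p2(2) by (rule Esym)
      show False
      proof (cases "p1 = p2")
        case True
        show False
          by (rule no5[of p1 x1 q1 q2 x2]) (use p1 h e2 True xP x12 q12 in auto)
      next
        case False
        have e3: "E p2 u" using up1(2) by (rule Esym)
        show False
          by (rule no7[of u p1 x1 q1 q2 x2 p2]) (use p1 p2 up1 h e2 e3 False xP x12 q12 uP in auto)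
      qed
    qed
  qed
  have XC: "X \<subseteq> C" "P \<subseteq> C" "W \<subseteq> C" unfolding X_def P_def W_def by auto
  have Zind: "\<forall>z1\<in>Z. \<forall>z2\<in>Z. \<not> E z1 z2"
  proof (intro ballI notI)
    fix z1 z2 assume z: "z1 \<in> Z" "z2 \<in> Z" "E z1 z2"
    obtain x1 where x1: "x1 \<in> X" "E z1 x1" using z(1) unfolding Z_def by blast
    obtain x2 where x2: "x2 \<in> X" "E z2 x2" using z(2) unfolding Z_def by blast
    have nC: "z1 \<notin> C" "z2 \<notin> C" using z SnC unfolding Z_def by auto
    have "E x1 z1" using x1(2) by (rule Esym)
    thus False using XqqX[OF x1(1) x2(1), of z1 z2] nC XC u z(3) x2(2) by blast
  qed
  have finW: "finite (W - NT)" using finC unfolding W_def by auto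
  have YI: "Y - NT \<subseteq> W - NT" unfolding Y_def by auto
  have Yind: "\<forall>y1\<in>Y - NT. \<forall>y2\<in>Y - NT. \<not> E y1 y2"
  proof (intro ballI notI)
    fix y1 y2 assume y: "y1 \<in> Y - NT" "y2 \<in> Y - NT" "E y1 y2"
    obtain x1 where x1: "x1 \<in> X" "E x1 y1" using y(1) unfolding Y_def by blast
    obtain x2 where x2: "x2 \<in> X" "E x2 y2" using y(2) unfolding Y_def by blast
    have nC: "y1 \<notin> insert u (P \<union> X)" "y2 \<notin> insert u (P \<union> X)" using y unfolding Y_def W_def by auto
    have "E y2 x2" using x2(2) by (rule Esym)
    thus False using XqqX[OF x1(1) x2(1) nC] x1(2) y(3) by blast
  qed
  obtain K where K: "Y - NT \<subseteq> K" "K \<subseteq> W - NT" "\<forall>a\<in>K. \<forall>b\<in>K. \<not> E a b"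
     "\<forall>a\<in>(W - NT) - K. \<exists>k\<in>K. E a k"
    using maxext[OF finW YI Yind] by blast
  define M where "M = insert u K"
  define J where "J = P \<union> K"
  have Wu: "\<And>w. w \<in> W \<Longrightarrow> \<not> E u w \<and> \<not> E w u"
  proof -
    fix w assume w: "w \<in> W"
    have "\<not> E u w" using w unfolding W_def P_def by blast
    moreover have "\<not> E w u" using calculation Esym by blast
    ultimately show "\<not> E u w \<and> \<not> E w u" by blast
  qed
  have WP: "\<And>w p. w \<in> W \<Longrightarrow> p \<in> P \<Longrightarrow> \<not> E w p \<and> \<not> E p w"
  proof -
    fix w p assume w: "w \<in> W" and p: "p \<in> P"
    have "\<not> E p w" using w p unfolding W_def X_def by blast
    moreover have "\<not> E w p" using calculation Esym by blast
    ultimately show "\<not> E w p \<and> \<not> E p w" by blast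
  qed
  have uZ: "\<And>t. t \<in> Z \<Longrightarrow> \<not> E u t"
  proof
    fix t assume t: "t \<in> Z" "E u t"
    obtain y where y: "y \<in> X" "E t y" using t(1) unfolding Z_def by blast
    obtain p where p: "p \<in> P" "E p y" using y(1) unfolding X_def by blast
    have "E u p" using p(1) unfolding P_def by blast
    have tC: "t \<notin> C" using t(1) SnC unfolding Z_def by blast
    have yy: "y \<notin> P" "y \<noteq> u" using y(1) unfolding X_def by auto
    have "E y t" using y(2) by (rule Esym)
    moreover have "E t u" using t(2) by (rule Esym)
    ultimately show False
      by (intro no4[of u p y t]) (use \<open>E u p\<close> p yy tC u XC y(1) uP in auto)
  qed
  have "card J \<le> card M + 1"
  proof (rule key[OF awc x Cd, of Z M J])
    show "Z \<subseteq> Supp" unfolding Z_def by blast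
    show "\<forall>a\<in>Z. \<forall>b\<in>Z. \<not> E a b" by (fact Zind)
    show "M \<subseteq> C" unfolding M_def using u K(2) XC by blast
    show "\<forall>a\<in>M. \<forall>b\<in>M. \<not> E a b" unfolding M_def using K(2,3) Wu Eirr by blast
    show "\<forall>m\<in>M. \<forall>t\<in>Z. \<not> E m t" using uZ K(2) unfolding M_def NT_def by blast
    show "J \<subseteq> C" unfolding J_def using K(2) XC by blast
    show "\<forall>a\<in>J. \<forall>b\<in>J. \<not> E a b" unfolding J_def using Pind K(2,3) WP by blast
    show "\<forall>c\<in>C. (\<forall>t\<in>Z. \<not> E c t) \<longrightarrow> c \<in> M \<or> (\<exists>m\<in>M. E c m)"
    proof (intro ballI impI)
      fix c assume c: "c \<in> C" and cT: "\<forall>t\<in>Z. \<not> E c t"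
      have cNT: "c \<notin> NT" using cT unfolding NT_def by blast
      consider "c = u" | "c \<in> P" | "c \<in> X" | "c \<in> W" unfolding W_def using c by blast
      thus "c \<in> M \<or> (\<exists>m\<in>M. E c m)"
      proof cases
        case 1 thus ?thesis unfolding M_def by blast
      next
        case 2
        hence "E c u" unfolding P_def by (blast intro: Esym)
        thus ?thesis unfolding M_def by blast
      next
        case 4
        thus ?thesis using K(4) cNT unfolding M_def by blast
      next
        case 3
        obtain p where p: "p \<in> P" "E p c" using 3 unfolding X_def by blast
        have ecp: "E c p" using p(2) by (rule Esym)
        obtain y where y: "E c y" "y \<noteq> p" using V0_two_nbrs[of c p] CV0 c CnU ecp by blast
        have cc: "c \<notin> P" "c \<noteq> u" using 3 unfolding X_def by auto
        have up: "E u p" using p(1) unfolding P_def by blast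
        have eyc: "E y c" using y(1) by (rule Esym)
        consider "y \<in> VZ" | "y \<in> Supp" using V0_nbr_cases[of c y] CV0 c y(1) by blast
        thus ?thesis
        proof cases
          case 2
          hence "y \<in> Z" unfolding Z_def using 3 eyc by blast
          thus ?thesis using cT y(1) by blast
        next
          case 1
          hence yC: "y \<in> C" using Cclo c y(1) by blast
          have "y \<noteq> u" using cc(1) c eyc unfolding P_def by blast
          moreover have "y \<notin> P"
          proof
            assume yP: "y \<in> P"
            have "E y u" using yP unfolding P_def by (blast intro: Esym)
            thus False by (intro no4[of u p c y]) (use up p y cc yP uP in auto)
          qed
          moreover have "y \<notin> X"
          proof
            assume yX: "y \<in> X"
            obtain p' where p': "p' \<in> P" "E p' y" using yX unfolding X_def by blast
            have eyp: "E y p'" using p'(2) by (rule Esym)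
            have yy: "y \<notin> P" "y \<noteq> u" using yX unfolding X_def by auto
            show False
            proof (cases "p' = p")
              case True
              thus False using no3[of p c y] p(2) y(1) eyp by blast
            next
              case False
              have "E p' u" using p'(1) unfolding P_def by (blast intro: Esym)
              thus False by (intro no5[of u p c y p']) (use up p p' y(1) eyp cc yy False uP Eirr in auto)
            qed
          qed
          ultimately have yW: "y \<in> W" unfolding W_def using yC by blast
          hence yY: "y \<in> Y" unfolding Y_def using 3 y(1) by blast
          show ?thesis
          proof (cases "y \<in> NT")
            case False
            hence "y \<in> K" using yY K(1) by blast
            thus ?thesis using y(1) unfolding M_def by blast
          next
            case True
            then obtain t where t: "t \<in> Z" "E y t" unfolding NT_def by blast
            obtain x2 where x2: "x2 \<in> X" "E t x2" using t(1) unfolding Z_def by blast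
            have tn: "t \<notin> insert u (P \<union> X)" using t(1) SnC XC u unfolding Z_def by blast
            have yn: "y \<notin> insert u (P \<union> X)" using yW unfolding W_def by blast
            show ?thesis using XqqX[OF 3 x2(1) yn tn y(1) t(2) x2(2)] by blast
          qed
        qed
      qed
    qed
  qed
  moreover have "card J = card P + card K"
  proof -
    have "finite P" "finite K" using finC XC K(2) unfolding W_def by (auto intro: finite_subset)
    moreover have "P \<inter> K = {}" using K(2) unfolding W_def by blast
    ultimately show ?thesis unfolding J_def by (simp add: card_Un_disjoint)
  qed
  moreover have "card M = card K + 1"
  proof -
    have "finite K" using finC K(2) unfolding W_def by (auto intro: finite_subset)
    moreover have "u \<notin> K" using K(2) unfolding W_def by blast
    ultimately show ?thesis unfolding M_def by simp
  qed
  moreover have "card P \<ge> 3"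
  proof -
    have "{a, b, c} \<subseteq> P" unfolding P_def using abc by blast
    moreover have "finite P" using finC XC by (auto intro: finite_subset)
    ultimately have "card {a,b,c} \<le> card P" by (rule card_mono[rotated])
    thus ?thesis using dist by simp
  qed
  ultimately show False by linarith
qed



lemma bound:
  assumes awc: "almost_well_covered V E" and x: "x \<in> VZ"
    and Cd: "C = component (E0 V E) x"
    and inj: "inj_on f {..<n}" and img: "f ` {..<n} = C" and n1: "n \<ge> 1"
    and cyc3: "cyc \<longrightarrow> n \<ge> 3"
    and adj: "\<forall>i<n. \<forall>j<n. E (f i) (f j) \<longleftrightarrow>
       (j = Suc i \<or> i = Suc j \<or> (cyc \<and> ((i = 0 \<and> j = n - 1) \<or> (i = n - 1 \<and> j = 0))))"
  shows "(if cyc then n div 2 else (n + 1) div 2) \<le> (n + 2) div 3 + 1"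
proof -
  define a where "a = (if cyc then n div 2 else (n + 1) div 2)"
  define b where "b = (n + 2) div 3"
  define g where "g = (\<lambda>k. min (3 * k + 1) (n - 1))"
  define J where "J = (\<lambda>k. f (2 * k)) ` {..<a}"
  define M where "M = (\<lambda>k. f (g k)) ` {..<b}"
  have a2: "\<And>k. k < a \<Longrightarrow> 2 * k < n" unfolding a_def by (auto split: if_splits)
  have gn: "\<And>k. k < b \<Longrightarrow> g k < n" unfolding g_def using n1 by auto
  have "inj_on (\<lambda>k. f (2 * k)) {..<a}"
  proof (rule inj_onI)
    fix k k' assume "k \<in> {..<a}" "k' \<in> {..<a}" "f (2 * k) = f (2 * k')"
    thus "k = k'" using inj a2 unfolding inj_on_def by fastforce
  qed
  hence cardJ: "card J = a" unfolding J_def by (simp add: card_image)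
  have cardM: "card M \<le> b" unfolding M_def using card_image_le[of "{..<b}"] by simp
  have "card J \<le> card M + 1"
  proof (rule key[OF awc x Cd, of "{}" M J])
    show "{} \<subseteq> Supp" by simp
    show "\<forall>a\<in>{}. \<forall>b\<in>{}. \<not> E a b" by simp
    show "\<forall>m\<in>M. \<forall>t\<in>{}. \<not> E m t" by simp
    show "M \<subseteq> C" unfolding M_def using gn img by blast
    show "J \<subseteq> C" unfolding J_def using a2 img by blast
    show "\<forall>p\<in>M. \<forall>q\<in>M. \<not> E p q"
    proof (intro ballI)
      fix p q assume "p \<in> M" "q \<in> M"
      then obtain k k' where k: "k < b" "k' < b" "p = f (g k)" "q = f (g k')" unfolding M_def by blast
      have gb: "\<And>k. k < b \<Longrightarrow> 3 * k \<le> g k \<and> g k \<le> 3 * k + 1 \<and> (n \<ge> 2 \<longrightarrow> g k \<ge> 1)"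
      proof -
        fix k assume "k < b"
        hence "3 * k + 1 \<le> n" unfolding b_def by linarith
        thus "3 * k \<le> g k \<and> g k \<le> 3 * k + 1 \<and> (n \<ge> 2 \<longrightarrow> g k \<ge> 1)" unfolding g_def by auto
      qed
      have "\<not> (g k' = Suc (g k) \<or> g k = Suc (g k') \<or> (cyc \<and> ((g k = 0 \<and> g k' = n - 1) \<or> (g k = n - 1 \<and> g k' = 0))))"
      proof (cases "k = k'")
        case True
        thus ?thesis using gb[OF k(1)] cyc3 by auto
      next
        case False
        hence "k < k' \<or> k' < k" by linarith
        thus ?thesis using gb[OF k(1)] gb[OF k(2)] cyc3 by auto
      qed
      thus "\<not> E p q" using adj gn[OF k(1)] gn[OF k(2)] k(3,4) by blast
    qed
    show "\<forall>p\<in>J. \<forall>q\<in>J. \<not> E p q"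
    proof (intro ballI)
      fix p q assume "p \<in> J" "q \<in> J"
      then obtain k k' where k: "k < a" "k' < a" "p = f (2 * k)" "q = f (2 * k')" unfolding J_def by blast
      have "\<not> (2 * k' = Suc (2 * k) \<or> 2 * k = Suc (2 * k') \<or> (cyc \<and> ((2 * k = 0 \<and> 2 * k' = n - 1) \<or> (2 * k = n - 1 \<and> 2 * k' = 0))))"
        using k(1,2) cyc3 n1 unfolding a_def by (cases cyc; simp; presburger)
      thus "\<not> E p q" using adj a2[OF k(1)] a2[OF k(2)] k(3,4) by blast
    qed
    show "\<forall>c\<in>C. (\<forall>t\<in>{}. \<not> E c t) \<longrightarrow> c \<in> M \<or> (\<exists>m\<in>M. E c m)"
    proof (intro ballI impI)
      fix c assume "c \<in> C"
      then obtain i where i: "i < n" "c = f i" using img by blast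
      define k where "k = i div 3"
      have kb: "k < b" unfolding k_def b_def using i(1) by presburger
      have "g k = i \<or> g k = Suc i \<or> i = Suc (g k)" unfolding g_def k_def using i(1) by presburger
      moreover have "f (g k) \<in> M" unfolding M_def using kb by blast
      moreover have "g k < n" using gn kb by blast
      ultimately show "c \<in> M \<or> (\<exists>m\<in>M. E c m)" using adj i by blast
    qed
  qed
  thus ?thesis using cardJ cardM unfolding a_def b_def by simp
qed



definition pth :: "'a set \<Rightarrow> 'a list \<Rightarrow> bool" where
  "pth C xs \<longleftrightarrow> distinct xs \<and> set xs \<subseteq> C \<and> (\<forall>i. Suc i < length xs \<longrightarrow> E (xs!i) (xs!Suc i))"

lemma E0_sym: "(E0 V E)\<^sup>*\<^sup>* a b \<Longrightarrow> (E0 V E)\<^sup>*\<^sup>* b a"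
proof (induction rule: rtranclp_induct)
  case base then show ?case by simp
next
  case (step y z)
  have "E0 V E z y" using step(2) Esym unfolding E0_def by blast
  then show ?case using step(3) by (meson converse_rtranclp_into_rtranclp)
qed

lemma cadj: "i < n \<Longrightarrow> j < n \<Longrightarrow> n \<ge> 3 \<Longrightarrow>
  cycle_adj n i j \<longleftrightarrow> (j = Suc i \<or> i = Suc j \<or> ((i = 0 \<and> j = n - 1) \<or> (i = n - 1 \<and> j = 0)))"
  unfolding cycle_adj_def
  by (cases "Suc i = n"; cases "Suc j = n"; auto)

lemma main:
  assumes awc: "almost_well_covered V E" and x: "x \<in> VZ"
  shows "(\<exists>n\<in>{1,2,3,4,5,6,7,8,10}. induced_iso_path E (component (E0 V E) x) n)
       \<or> (\<exists>n\<in>{6,8,9,10,11,13}. induced_iso_cycle E (component (E0 V E) x) n)"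
proof -
  define C where "C = component (E0 V E) x"
  have CV0: "C \<subseteq> VZ" using E0_comp x C_def by blast
  have CV: "C \<subseteq> V" using CV0 V0_V by blast
  have finC: "finite C" using CV finV finite_subset by blast
  have xC: "x \<in> C" unfolding C_def component_def by simp
  have dg: "\<And>u a b c. u \<in> C \<Longrightarrow> a \<in> C \<Longrightarrow> b \<in> C \<Longrightarrow> c \<in> C \<Longrightarrow> E u a \<Longrightarrow> E u b \<Longrightarrow> E u c
     \<Longrightarrow> a \<noteq> b \<Longrightarrow> a \<noteq> c \<Longrightarrow> b \<noteq> c \<Longrightarrow> False"
    using deg2[OF awc x C_def] by blast
  have bnd: "\<forall>ys. pth C ys \<longrightarrow> length ys < card C + 1"
  proof (intro allI impI)
    fix ys assume "pth C ys"
    hence "card (set ys) = length ys" "set ys \<subseteq> C" unfolding pth_def by (auto simp: distinct_card)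
    moreover have "card (set ys) \<le> card C" using card_mono[OF finC] \<open>set ys \<subseteq> C\<close> by blast
    ultimately show "length ys < card C + 1" by linarith
  qed
  have px: "pth C [x]" unfolding pth_def using xC by simp
  obtain xs where xs: "pth C xs" "\<forall>ys. pth C ys \<longrightarrow> length ys \<le> length xs"
    using ex_has_greatest_nat[of "pth C" "[x]" length "card C + 1", OF px bnd] by blast
  define n where "n = length xs"
  have dxs: "distinct xs" and sxs: "set xs \<subseteq> C" and exs: "\<And>i. Suc i < n \<Longrightarrow> E (xs!i) (xs!Suc i)"
    using xs(1) unfolding pth_def n_def by auto
  have n1: "n \<ge> 1" using xs(2) \<open>pth C [x]\<close> unfolding n_def by fastforce
  have xsC: "\<And>i. i < n \<Longrightarrow> xs ! i \<in> C" using sxs nth_mem unfolding n_def by blast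
  have dI: "\<And>i j. i < n \<Longrightarrow> j < n \<Longrightarrow> xs ! i = xs ! j \<longleftrightarrow> i = j"
    using dxs nth_eq_iff_index_eq unfolding n_def by blast
  have nb: "\<And>i w. i < n \<Longrightarrow> w \<in> C \<Longrightarrow> E (xs!i) w \<Longrightarrow> w \<in> set xs"
  proof (rule ccontr)
    fix i w assume i: "i < n" and w: "w \<in> C" "E (xs!i) w" and wn: "w \<notin> set xs"
    show False
    proof (cases "i = n - 1")
      case True
      have "pth C (xs @ [w])" unfolding pth_def
      proof (intro conjI allI impI)
        show "distinct (xs @ [w])" using dxs wn by simp
        show "set (xs @ [w]) \<subseteq> C" using sxs w by simp
        fix k assume k: "Suc k < length (xs @ [w])"
        show "E ((xs @ [w]) ! k) ((xs @ [w]) ! Suc k)"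
        proof (cases "Suc k < n")
          case True thus ?thesis using exs[OF True] unfolding n_def by (simp add: nth_append)
        next
          case False
          hence "k = n - 1" "Suc k = n" using k unfolding n_def by auto
          thus ?thesis using w(2) \<open>i = n - 1\<close> n1 unfolding n_def by (simp add: nth_append)
        qed
      qed
      thus False using xs(2) unfolding n_def by fastforce
    next
      case ni: False
      show False
      proof (cases "i = 0")
        case True
        have "pth C (w # xs)" unfolding pth_def
        proof (intro conjI allI impI)
          show "distinct (w # xs)" using dxs wn by simp
          show "set (w # xs) \<subseteq> C" using sxs w by simp
          fix k assume k: "Suc k < length (w # xs)"
          show "E ((w # xs) ! k) ((w # xs) ! Suc k)"
          proof (cases k)
            case 0
            have "E w (xs ! 0)" using w(2) True by (simp add: Esym)
            thus ?thesis using 0 by simp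
          next
            case (Suc k')
            thus ?thesis using exs[of k'] k unfolding n_def by simp
          qed
        qed
        thus False using xs(2) unfolding n_def by fastforce
      next
        case False
        have i1: "Suc i < n" using ni i by linarith
        have e1: "E (xs!i) (xs!(i - 1))" using exs[of "i - 1"] False i by (simp add: Esym)
        have e2: "E (xs!i) (xs!Suc i)" using exs[OF i1] .
        have "xs!(i - 1) \<noteq> xs!Suc i" using dI[of "i - 1" "Suc i"] i i1 by simp
        moreover have "xs!(i - 1) \<noteq> w" "xs!Suc i \<noteq> w" using wn nth_mem i i1 unfolding n_def by force+
        ultimately show False using dg[OF xsC[OF i] xsC[of "i - 1"] xsC[OF i1] w(1) e1 e2 w(2)] i by linarith
      qed
    qed
  qed
  have setC: "set xs = C"
  proof
    show "set xs \<subseteq> C" by (fact sxs)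
    show "C \<subseteq> set xs"
    proof
      fix y assume "y \<in> C"
      hence xy: "(E0 V E)\<^sup>*\<^sup>* x y" unfolding C_def component_def by simp
      have ne: "0 < length xs" using n1 unfolding n_def by linarith
      have v00: "xs ! 0 \<in> set xs" using ne by (rule nth_mem)
      have v0: "xs ! 0 \<in> set xs" "xs ! 0 \<in> C" using v00 sxs by auto
      hence "(E0 V E)\<^sup>*\<^sup>* x (xs ! 0)" unfolding C_def component_def by simp
      hence "(E0 V E)\<^sup>*\<^sup>* (xs ! 0) y" using E0_sym xy by (meson rtranclp_trans)
      thus "y \<in> set xs"
      proof (induction rule: rtranclp_induct)
        case base then show ?case using v0 by simp
      next
        case (step z w)
        then obtain i where i: "i < n" "z = xs ! i" unfolding n_def by (metis in_set_conv_nth)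
        have zC: "z \<in> C" using step(3) sxs by blast
        have w: "E z w" "w \<in> VZ" using step(2) unfolding E0_def by auto
        have "w \<in> C" using E0_closed[OF x, of z w] zC w C_def by blast
        thus ?case using nb[OF i(1)] i(2) w(1) by blast
      qed
    qed
  qed
  have chord: "\<And>i j. i < j \<Longrightarrow> j < n \<Longrightarrow> E (xs!i) (xs!j) \<Longrightarrow> j = Suc i \<or> (i = 0 \<and> j = n - 1)"
  proof (rule ccontr)
    fix i j assume ij: "i < j" "j < n" "E (xs!i) (xs!j)" and nc: "\<not> (j = Suc i \<or> i = 0 \<and> j = n - 1)"
    show False
    proof (cases "i = 0")
      case False
      have i1: "Suc i < j" using ij nc by linarith
      have e1: "E (xs!i) (xs!(i - 1))" using exs[of "i - 1"] False ij by (simp add: Esym)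
      have e2: "E (xs!i) (xs!Suc i)" using exs[of i] i1 ij by simp
      have d: "xs!(i - 1) \<noteq> xs!Suc i" "xs!(i - 1) \<noteq> xs!j" "xs!Suc i \<noteq> xs!j"
        using dI[of "i - 1" "Suc i"] dI[of "i - 1" j] dI[of "Suc i" j] i1 ij by auto
      show False using dg[OF xsC[of i] xsC[of "i - 1"] xsC[of "Suc i"] xsC[of j] e1 e2 ij(3) d] i1 ij by linarith
    next
      case True
      have j1: "Suc j < n" "j \<ge> 2" using ij nc True by auto
      have e1: "E (xs!j) (xs!(j - 1))" using exs[of "j - 1"] j1 ij by (simp add: Esym)
      have e2: "E (xs!j) (xs!Suc j)" using exs[of j] j1 by simp
      have e3: "E (xs!j) (xs!i)" using ij(3) by (simp add: Esym)
      have d: "xs!(j - 1) \<noteq> xs!Suc j" "xs!(j - 1) \<noteq> xs!i" "xs!Suc j \<noteq> xs!i"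
        using dI[of "j - 1" "Suc j"] dI[of "j - 1" i] dI[of "Suc j" i] j1 ij True by auto
      show False using dg[OF xsC[of j] xsC[of "j - 1"] xsC[of "Suc j"] xsC[of i] e1 e2 e3 d] j1 ij by linarith
    qed
  qed
  define cyc where "cyc = (n \<ge> 3 \<and> E (xs!0) (xs!(n - 1)))"
  have adj: "\<forall>i<n. \<forall>j<n. E (xs ! i) (xs ! j) \<longleftrightarrow>
       (j = Suc i \<or> i = Suc j \<or> (cyc \<and> ((i = 0 \<and> j = n - 1) \<or> (i = n - 1 \<and> j = 0))))"
  proof (intro allI impI)
    fix i j assume i: "i < n" and j: "j < n"
    show "E (xs ! i) (xs ! j) \<longleftrightarrow> (j = Suc i \<or> i = Suc j \<or> (cyc \<and> ((i = 0 \<and> j = n - 1) \<or> (i = n - 1 \<and> j = 0))))"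
    proof
      assume e: "E (xs ! i) (xs ! j)"
      have e': "E (xs ! j) (xs ! i)" using e by (rule Esym)
      consider "i = j" | "i < j" | "j < i" by linarith
      thus "j = Suc i \<or> i = Suc j \<or> (cyc \<and> ((i = 0 \<and> j = n - 1) \<or> (i = n - 1 \<and> j = 0)))"
      proof cases
        case 1 thus ?thesis using e Eirr by simp
      next
        case 2
        from chord[OF 2 j e] show ?thesis
        proof
          assume h: "i = 0 \<and> j = n - 1"
          show ?thesis
          proof (cases "n \<ge> 3")
            case True thus ?thesis using h e unfolding cyc_def by simp
          next
            case False thus ?thesis using h 2 by linarith
          qed
        qed simp
      next
        case 3
        from chord[OF 3 i e'] show ?thesis
        proof
          assume h: "j = 0 \<and> i = n - 1"
          show ?thesis
          proof (cases "n \<ge> 3")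
            case True thus ?thesis using h e' unfolding cyc_def by simp
          next
            case False thus ?thesis using h 3 by linarith
          qed
        qed simp
      qed
    next
      assume h: "j = Suc i \<or> i = Suc j \<or> (cyc \<and> ((i = 0 \<and> j = n - 1) \<or> (i = n - 1 \<and> j = 0)))"
      show "E (xs ! i) (xs ! j)"
      proof -
        consider "j = Suc i" | "i = Suc j" | "cyc \<and> i = 0 \<and> j = n - 1" | "cyc \<and> i = n - 1 \<and> j = 0"
          using h by blast
        thus ?thesis
        proof cases
          case 1 thus ?thesis using exs j by simp
        next
          case 2 thus ?thesis using exs[of j] i by (simp add: Esym)
        next
          case 3 thus ?thesis unfolding cyc_def by simp
        next
          case 4 thus ?thesis unfolding cyc_def by (simp add: Esym)
        qed
      qed
    qed
  qed
  have inj: "inj_on ((!) xs) {..<n}" using dxs unfolding n_def by (intro inj_on_nth) auto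
  have img: "(!) xs ` {..<n} = C" using setC unfolding n_def by (auto simp: set_conv_nth)
  have cyc3: "cyc \<longrightarrow> n \<ge> 3" unfolding cyc_def by simp
  have bd: "(if cyc then n div 2 else (n + 1) div 2) \<le> (n + 2) div 3 + 1"
    using bound[OF awc x C_def inj img n1 cyc3 adj] .
  have bij: "bij_betw ((!) xs) {0..<n} C"
    using bij_betw_nth[OF dxs, of "{0..<n}" C] setC unfolding n_def by (simp add: atLeast0LessThan)
  show ?thesis
  proof (cases cyc)
    case False
    have "induced_iso_path E C n"
      unfolding induced_iso_path_def
    proof (intro exI conjI)
      show "bij_betw ((!) xs) {0..<n} C" by (fact bij)
      show "\<forall>i<n. \<forall>j<n. E (xs ! i) (xs ! j) = path_adj i j"
        using adj False unfolding path_adj_def by simp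
    qed
    moreover have "n \<in> {1,2,3,4,5,6,7,8,10}" using bd False n1 by simp presburger
    ultimately show ?thesis unfolding C_def by blast
  next
    case True
    have ng3: "n \<ge> 3" using True cyc3 by blast
    have cad: "\<forall>i<n. \<forall>j<n. E (xs ! i) (xs ! j) = cycle_adj n i j"
      using adj True cadj ng3 by simp
    have "induced_iso_cycle E C n"
      unfolding induced_iso_cycle_def using bij cad by blast
    moreover have "has_induced_cycle V E n"
      by (rule mkcyc[of xs n]) (use dxs setC CV cad in \<open>auto simp: n_def\<close>)
    hence "n \<noteq> 3" "n \<noteq> 4" "n \<noteq> 5" "n \<noteq> 7" using n3 n4 n5 n7 by auto
    moreover have "n \<in> {6,8,9,10,11,13}"
      using bd True ng3 calculation(2-5) by simp presburger
    ultimately show ?thesis unfolding C_def by blast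
  qed
qed


end

theorem corollary20:
  fixes V :: "'a set" and E :: "'a \<Rightarrow> 'a \<Rightarrow> bool"
  assumes "simple_graph V E"
    and "almost_well_covered V E"
    and "\<not> has_induced_cycle V E 3" and "\<not> has_induced_cycle V E 4"
    and "\<not> has_induced_cycle V E 5" and "\<not> has_induced_cycle V E 7"
    and "\<not> (\<exists>v\<in>V. has_type V E v 2)"
    and "x \<in> V0 V E"
  shows "(\<exists>n\<in>{1,2,3,4,5,6,7,8,10}. induced_iso_path E (component (E0 V E) x) n)
       \<or> (\<exists>n\<in>{6,8,9,10,11,13}. induced_iso_cycle E (component (E0 V E) x) n)"
proof -
  interpret gr V E using assms(1,3,4,5,6) by unfold_locales
  show ?thesis using main assms(2,8) by blast
qed

end
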